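(* Let $G$ be a finite, simple, connected graph with $m$ edges and let $k \geq 2$ be an integer. Then $$\chi_{dd}(P_{k+1}) \leq \chi_{dd}(S_k(G)) \leq (m-1)\chi_{dd}(P_k) + \chi_{dd}(P_{k+1}),$$ where $S_k(G)$ is the $k$-subdivision of $G$, i.e. the graph obtained from $G$ by replacing each edge $uv$ with a path of length $k$ (with $k-1$ new internal vertices) joining $u$ and $v$, and $P_n$ denotes the path on $n$ vertices.
   Context: All graphs are finite, undirected and simple. For a vertex $w$, $N(w)$ is its open neighborhood and $N[w]=N(w)\cup\{w\}$ its closed neighborhood. A vertex $w$ dominates a set $S$ of vertices if $S \subseteq N[w]$. A domination coloring of a graph $H$ is a proper vertex coloring of $H$ (adjacent vertices receive different colors; a color class is the set of all vertices receiving a given color) such that every vertex of $H$ dominates at least one color class (possibly its own class), and every color class is dominated by at least one vertex of $H$. The domination chromatic number $\chi_{dd}(H)$ is the minimum number of color classes in a domination coloring of $H$. *)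

theory Defs
  imports Main
begin

definition simple_graph :: "'a set \<Rightarrow> ('a \<Rightarrow> 'a \<Rightarrow> bool) \<Rightarrow> bool" where
  "simple_graph V E \<longleftrightarrow> finite V \<and>
     (\<forall>u v. E u v \<longrightarrow> u \<in> V \<and> v \<in> V \<and> u \<noteq> v \<and> E v u)"

definition connected_graph :: "'a set \<Rightarrow> ('a \<Rightarrow> 'a \<Rightarrow> bool) \<Rightarrow> bool" where
  "connected_graph V E \<longleftrightarrow> V \<noteq> {} \<and> (\<forall>u\<in>V. \<forall>v\<in>V. E\<^sup>*\<^sup>* u v)"

definition num_edges :: "'a set \<Rightarrow> ('a \<Rightarrow> 'a \<Rightarrow> bool) \<Rightarrow> nat" where
  "num_edges V E = card {{u, v} | u v. u \<in> V \<and> v \<in> V \<and> E u v}"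

definition closed_nbhd :: "'a set \<Rightarrow> ('a \<Rightarrow> 'a \<Rightarrow> bool) \<Rightarrow> 'a \<Rightarrow> 'a set" where
  "closed_nbhd V E w = {x \<in> V. E w x} \<union> {w}"

definition color_class :: "'a set \<Rightarrow> ('a \<Rightarrow> nat) \<Rightarrow> nat \<Rightarrow> 'a set" where
  "color_class V c i = {x \<in> V. c x = i}"

definition dom_coloring :: "'a set \<Rightarrow> ('a \<Rightarrow> 'a \<Rightarrow> bool) \<Rightarrow> ('a \<Rightarrow> nat) \<Rightarrow> bool" where
  "dom_coloring V E c \<longleftrightarrow>
     (\<forall>u\<in>V. \<forall>v\<in>V. E u v \<longrightarrow> c u \<noteq> c v) \<and>
     (\<forall>w\<in>V. \<exists>i\<in>c ` V. color_class V c i \<subseteq> closed_nbhd V E w) \<and>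
     (\<forall>i\<in>c ` V. \<exists>w\<in>V. color_class V c i \<subseteq> closed_nbhd V E w)"

definition chi_dd :: "'a set \<Rightarrow> ('a \<Rightarrow> 'a \<Rightarrow> bool) \<Rightarrow> nat" where
  "chi_dd V E = (LEAST n. \<exists>c :: 'a \<Rightarrow> nat. dom_coloring V E c \<and> card (c ` V) = n)"

definition path_V :: "nat \<Rightarrow> nat set" where
  "path_V n = {0..<n}"

definition path_E :: "nat \<Rightarrow> nat \<Rightarrow> nat \<Rightarrow> bool" where
  "path_E n i j \<longleftrightarrow> i < n \<and> j < n \<and> (j = i + 1 \<or> i = j + 1)"

text \<open>k-subdivision. Original vertices are Inl u; for an edge uv with u < v,
the internal vertices are Inr (u, v, i), 0 < i < k, at distance i from u.\<close>
definition sub_pos :: "nat \<Rightarrow> 'a \<Rightarrow> 'a \<Rightarrow> nat \<Rightarrow> 'a + ('a \<times> 'a \<times> nat)" where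
  "sub_pos k u v i = (if i = 0 then Inl u else if i = k then Inl v else Inr (u, v, i))"

definition subdiv_V :: "nat \<Rightarrow> ('a::linorder) set \<Rightarrow> ('a \<Rightarrow> 'a \<Rightarrow> bool)
    \<Rightarrow> ('a + ('a \<times> 'a \<times> nat)) set" where
  "subdiv_V k V E = Inl ` V \<union> {Inr (u, v, i) | u v i. u < v \<and> E u v \<and> 0 < i \<and> i < k}"

definition subdiv_E :: "nat \<Rightarrow> ('a::linorder) set \<Rightarrow> ('a \<Rightarrow> 'a \<Rightarrow> bool)
    \<Rightarrow> 'a + ('a \<times> 'a \<times> nat) \<Rightarrow> 'a + ('a \<times> 'a \<times> nat) \<Rightarrow> bool" where
  "subdiv_E k V E x y \<longleftrightarrow> (\<exists>u v i. u < v \<and> E u v \<and> i < k \<and>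
      ((x = sub_pos k u v i \<and> y = sub_pos k u v (i + 1)) \<or>
       (y = sub_pos k u v i \<and> x = sub_pos k u v (i + 1))))"

end

theory Submission
  imports Defs "HOL-Library.Nat_Bijection"
begin

lemma chi_dd_le:
  assumes "dom_coloring V E c"
  shows "chi_dd V E \<le> card (c ` V)"
  unfolding chi_dd_def by (rule Least_le) (use assms in blast)

lemma dom_coloring_exists:
  assumes "finite V" "\<forall>x\<in>V. \<not> E x x"
  shows "\<exists>c::'a\<Rightarrow>nat. dom_coloring V E c"
proof -
  obtain h :: "'a \<Rightarrow> nat" where h: "inj_on h V"
    using finite_imp_inj_to_nat_seg[OF assms(1)] by blast
  have cc: "color_class V h (h w) = {w}" if "w \<in> V" for w
    using h that unfolding color_class_def inj_on_def by blast
  have "dom_coloring V E h"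
    unfolding dom_coloring_def
  proof (intro conjI ballI impI)
    fix u v assume "u \<in> V" "v \<in> V" "E u v"
    then show "h u \<noteq> h v" using assms(2) h unfolding inj_on_def by metis
  next
    fix w assume "w \<in> V"
    then show "\<exists>i\<in>h ` V. color_class V h i \<subseteq> closed_nbhd V E w"
      using cc[of w] by (auto simp: closed_nbhd_def)
  next
    fix i assume "i \<in> h ` V"
    then show "\<exists>w\<in>V. color_class V h i \<subseteq> closed_nbhd V E w"
      using cc by (auto simp: closed_nbhd_def)
  qed
  thus ?thesis by blast
qed

lemma chi_dd_attained:
  assumes "finite V" "\<forall>x\<in>V. \<not> E x x"
  shows "\<exists>c. dom_coloring V E c \<and> card (c ` V) = chi_dd V E"
proof -
  from dom_coloring_exists[of V E] assms obtain c0 where "dom_coloring V E c0" by blast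
  hence "\<exists>n c. dom_coloring V E c \<and> card (c ` V) = n" by blast
  from LeastI_ex[OF this] show ?thesis unfolding chi_dd_def by blast
qed

lemma dcD:
  assumes "dom_coloring V E c"
  shows "\<And>u v. u \<in> V \<Longrightarrow> v \<in> V \<Longrightarrow> E u v \<Longrightarrow> c u \<noteq> c v"
    "\<And>w. w \<in> V \<Longrightarrow> \<exists>i\<in>c ` V. color_class V c i \<subseteq> closed_nbhd V E w"
    "\<And>i. i \<in> c ` V \<Longrightarrow> \<exists>w\<in>V. color_class V c i \<subseteq> closed_nbhd V E w"
proof -
  have "(\<forall>u\<in>V. \<forall>v\<in>V. E u v \<longrightarrow> c u \<noteq> c v) \<and>
     (\<forall>w\<in>V. \<exists>i\<in>c ` V. color_class V c i \<subseteq> closed_nbhd V E w) \<and>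
     (\<forall>i\<in>c ` V. \<exists>w\<in>V. color_class V c i \<subseteq> closed_nbhd V E w)"
    using assms unfolding dom_coloring_def .
  then show "\<And>u v. u \<in> V \<Longrightarrow> v \<in> V \<Longrightarrow> E u v \<Longrightarrow> c u \<noteq> c v"
    "\<And>w. w \<in> V \<Longrightarrow> \<exists>i\<in>c ` V. color_class V c i \<subseteq> closed_nbhd V E w"
    "\<And>i. i \<in> c ` V \<Longrightarrow> \<exists>w\<in>V. color_class V c i \<subseteq> closed_nbhd V E w"
    by (elim conjE; fast)+
qed

lemma dom_coloring_iso:
  assumes dc: "dom_coloring A EA cA" and bij: "bij_betw g A B"
    and edg: "\<And>a b. a \<in> A \<Longrightarrow> b \<in> A \<Longrightarrow> EB (g a) (g b) \<longleftrightarrow> EA a b"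
    and col: "\<And>a. a \<in> A \<Longrightarrow> d (g a) = cA a"
  shows "dom_coloring B EB d \<and> d ` B = cA ` A"
proof -
  have B: "B = g ` A" and inj: "inj_on g A" using bij by (auto simp: bij_betw_def)
  have img: "d ` B = cA ` A" unfolding B image_image using col by (auto simp: image_iff)
  have cc: "color_class B d i = g ` color_class A cA i" for i
    unfolding color_class_def B using col by auto
  have cn: "closed_nbhd B EB (g a) = g ` closed_nbhd A EA a" if "a \<in> A" for a
    unfolding closed_nbhd_def B using edg that by auto
  have sub: "g ` X \<subseteq> g ` Y \<longleftrightarrow> X \<subseteq> Y" if "X \<subseteq> A" "Y \<subseteq> A" for X Y
    using inj_on_image_mem_iff[OF inj _ that(2)] that(1) by blast
  have ccA: "color_class A cA i \<subseteq> A" for i unfolding color_class_def by auto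
  have cnA: "closed_nbhd A EA a \<subseteq> A" if "a \<in> A" for a using that unfolding closed_nbhd_def by auto
  from dc have p: "\<forall>u\<in>A. \<forall>v\<in>A. EA u v \<longrightarrow> cA u \<noteq> cA v"
    and d1: "\<forall>w\<in>A. \<exists>i\<in>cA ` A. color_class A cA i \<subseteq> closed_nbhd A EA w"
    and d2: "\<forall>i\<in>cA ` A. \<exists>w\<in>A. color_class A cA i \<subseteq> closed_nbhd A EA w"
    unfolding dom_coloring_def by auto
  have "dom_coloring B EB d"
    unfolding dom_coloring_def img
  proof (intro conjI ballI impI)
    fix u v assume "u \<in> B" "v \<in> B" "EB u v"
    then show "d u \<noteq> d v" using p edg col unfolding B by auto
  next
    fix w assume "w \<in> B"
    then obtain a where a: "a \<in> A" "w = g a" unfolding B by auto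
    then obtain i where "i \<in> cA ` A" "color_class A cA i \<subseteq> closed_nbhd A EA a" using d1 a(1) by blast
    then show "\<exists>i\<in>cA ` A. color_class B d i \<subseteq> closed_nbhd B EB w"
      using a cc cn sub ccA cnA by metis
  next
    fix i assume "i \<in> cA ` A"
    then obtain a where a: "a \<in> A" "color_class A cA i \<subseteq> closed_nbhd A EA a" using d2 by blast
    then show "\<exists>w\<in>B. color_class B d i \<subseteq> closed_nbhd B EB w"
      using cc cn sub ccA cnA unfolding B by (metis image_eqI)
  qed
  with img show ?thesis by simp
qed

lemma dom_coloring_union:
  assumes iota: "\<And>x. x \<in> V \<Longrightarrow> \<iota> x \<in> J"
    and parts: "\<And>j. j \<in> J \<Longrightarrow> dom_coloring {x\<in>V. \<iota> x = j} E d"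
    and inj: "inj_on F (J \<times> UNIV)"
  shows "dom_coloring V E (\<lambda>x. F (\<iota> x, d x))"
proof -
  define c where "c = (\<lambda>x. F (\<iota> x, d x))"
  define P where "P j = {x\<in>V. \<iota> x = j}" for j
  have ceq: "c y = F (j, \<delta>) \<longleftrightarrow> \<iota> y = j \<and> d y = \<delta>" if "y \<in> V" "j \<in> J" for y j \<delta>
  proof
    assume "c y = F (j, \<delta>)"
    hence "(\<iota> y, d y) = (j, \<delta>)"
      by (intro inj_onD[OF inj]) (use iota[OF that(1)] that in \<open>auto simp: c_def\<close>)
    thus "\<iota> y = j \<and> d y = \<delta>" by simp
  qed (simp add: c_def)
  have cc: "color_class V c (F (j, \<delta>)) = color_class (P j) d \<delta>" if "j \<in> J" for j \<delta>
    unfolding color_class_def P_def using ceq that by auto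
  have cn: "closed_nbhd (P j) E w \<subseteq> closed_nbhd V E w" for j w
    unfolding closed_nbhd_def P_def by auto
  have dcP: "dom_coloring (P j) E d" if "j \<in> J" for j using parts that unfolding P_def by simp
  have "dom_coloring V E c"
    unfolding dom_coloring_def
  proof (intro conjI ballI impI)
    fix u v assume uv: "u \<in> V" "v \<in> V" "E u v"
    show "c u \<noteq> c v"
    proof
      assume "c u = c v"
      hence "\<iota> u = \<iota> v" "d u = d v" using ceq[of v "\<iota> u" "d u"] uv iota unfolding c_def by auto
      moreover have "u \<in> P (\<iota> u)" "v \<in> P (\<iota> u)" using uv \<open>\<iota> u = \<iota> v\<close> unfolding P_def by auto
      ultimately show False using dcP[of "\<iota> u"] iota uv unfolding dom_coloring_def by metis
    qed
  next
    fix w assume w: "w \<in> V"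
    let ?j = "\<iota> w"
    have "w \<in> P ?j" using w unfolding P_def by auto
    then obtain \<delta> where \<delta>: "\<delta> \<in> d ` P ?j" "color_class (P ?j) d \<delta> \<subseteq> closed_nbhd (P ?j) E w"
      using dcP[of ?j] iota[OF w] unfolding dom_coloring_def by blast
    then obtain y where y: "y \<in> P ?j" "\<delta> = d y" by auto
    have yV: "y \<in> V" "\<iota> y = ?j" using y(1) unfolding P_def by auto
    have "F (?j, \<delta>) \<in> c ` V" by (rule rev_image_eqI[OF yV(1)]) (simp add: c_def yV(2) y(2))
    then show "\<exists>i\<in>c ` V. color_class V c i \<subseteq> closed_nbhd V E w"
      using \<delta> cc[OF iota[OF w]] cn by blast
  next
    fix i assume "i \<in> c ` V"
    then obtain x where x: "x \<in> V" "i = F (\<iota> x, d x)" unfolding c_def by auto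
    have "x \<in> P (\<iota> x)" using x unfolding P_def by auto
    then obtain w where w: "w \<in> P (\<iota> x)" "color_class (P (\<iota> x)) d (d x) \<subseteq> closed_nbhd (P (\<iota> x)) E w"
      using dcP[of "\<iota> x"] iota[OF x(1)] unfolding dom_coloring_def by blast
    then show "\<exists>w\<in>V. color_class V c i \<subseteq> closed_nbhd V E w"
      using x cc[OF iota[OF x(1)]] cn unfolding P_def by blast
  qed
  then show ?thesis unfolding c_def .
qed

lemma card_union_bound:
  assumes "finite V" "finite J" "\<And>x. x \<in> V \<Longrightarrow> \<iota> x \<in> J"
  shows "card ((\<lambda>x. F (\<iota> x, d x)) ` V) \<le> (\<Sum>j\<in>J. card (d ` {x\<in>V. \<iota> x = j}))"
proof -
  have "(\<lambda>x. F (\<iota> x, d x)) ` V \<subseteq> (\<Union>j\<in>J. (\<lambda>\<delta>. F (j, \<delta>)) ` (d ` {x\<in>V. \<iota> x = j}))"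
    using assms(3) by auto
  hence "card ((\<lambda>x. F (\<iota> x, d x)) ` V) \<le> card (\<Union>j\<in>J. (\<lambda>\<delta>. F (j, \<delta>)) ` (d ` {x\<in>V. \<iota> x = j}))"
    by (rule card_mono[rotated]) (use assms in auto)
  also have "\<dots> \<le> (\<Sum>j\<in>J. card ((\<lambda>\<delta>. F (j, \<delta>)) ` (d ` {x\<in>V. \<iota> x = j})))"
    by (rule card_UN_le) (rule assms(2))
  also have "\<dots> \<le> (\<Sum>j\<in>J. card (d ` {x\<in>V. \<iota> x = j}))"
    by (rule sum_mono) (rule card_image_le, use assms(1) in auto)
  finally show ?thesis .
qed


locale subd =
  fixes V :: "'a::linorder set" and E :: "'a \<Rightarrow> 'a \<Rightarrow> bool" and k :: nat
  assumes sg: "simple_graph V E" and k2: "k \<ge> 2"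
begin

abbreviation "VS \<equiv> subdiv_V k V E"
abbreviation "ES \<equiv> subdiv_E k V E"
abbreviation "sp \<equiv> sub_pos k"

lemma E_props: "E u v \<Longrightarrow> u \<in> V \<and> v \<in> V \<and> u \<noteq> v \<and> E v u"
  using sg unfolding simple_graph_def by blast

lemma finV: "finite V" using sg unfolding simple_graph_def by blast

lemma sp0[simp]: "sp u v 0 = Inl u" and spk[simp]: "sp u v k = Inl v"
  using k2 unfolding sub_pos_def by auto

lemma sp_int: "0 < i \<Longrightarrow> i < k \<Longrightarrow> sp u v i = Inr (u, v, i)"
  unfolding sub_pos_def by auto

lemma Inr_VS: "Inr (u, v, i) \<in> VS \<longleftrightarrow> u < v \<and> E u v \<and> 0 < i \<and> i < k"
  unfolding subdiv_V_def by auto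

lemma Inl_VS: "Inl x \<in> VS \<longleftrightarrow> x \<in> V"
  unfolding subdiv_V_def by auto

lemma sp_inj: "u \<noteq> v \<Longrightarrow> i \<le> k \<Longrightarrow> j \<le> k \<Longrightarrow> sp u v i = sp u v j \<longleftrightarrow> i = j"
  unfolding sub_pos_def by auto

lemma sp_in_VS: "u < v \<Longrightarrow> E u v \<Longrightarrow> i \<le> k \<Longrightarrow> sp u v i \<in> VS"
  using E_props[of u v] unfolding sub_pos_def subdiv_V_def by auto

lemma ES_sym: "ES x y \<longleftrightarrow> ES y x"
  unfolding subdiv_E_def by blast

lemma ES_Inr:
  assumes "Inr (u, v, j) \<in> VS"
  shows "ES (Inr (u, v, j)) y \<longleftrightarrow> y = sp u v (j - 1) \<or> y = sp u v (j + 1)"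
proof
  assume "ES (Inr (u, v, j)) y"
  then obtain u' v' i where "u' < v'" "E u' v'" "i < k"
    "(Inr (u, v, j) = sp u' v' i \<and> y = sp u' v' (i + 1)) \<or> (y = sp u' v' i \<and> Inr (u, v, j) = sp u' v' (i + 1))"
    unfolding subdiv_E_def by blast
  then show "y = sp u v (j - 1) \<or> y = sp u v (j + 1)"
    unfolding sub_pos_def by (auto split: if_splits)
next
  assume y: "y = sp u v (j - 1) \<or> y = sp u v (j + 1)"
  have a: "u < v" "E u v" "0 < j" "j < k" using assms Inr_VS by auto
  show "ES (Inr (u, v, j)) y"
    unfolding subdiv_E_def
  proof (cases "y = sp u v (j - 1)")
    case True
    then show "\<exists>u' v' i. u' < v' \<and> E u' v' \<and> i < k \<and> (Inr (u, v, j) = sp u' v' i \<and> y = sp u' v' (i + 1) \<or>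
          y = sp u' v' i \<and> Inr (u, v, j) = sp u' v' (i + 1))"
      using a sp_int[of j u v] by (intro exI[of _ u] exI[of _ v] exI[of _ "j - 1"]) auto
  next
    case False
    then show "\<exists>u' v' i. u' < v' \<and> E u' v' \<and> i < k \<and> (Inr (u, v, j) = sp u' v' i \<and> y = sp u' v' (i + 1) \<or>
          y = sp u' v' i \<and> Inr (u, v, j) = sp u' v' (i + 1))"
      using a y sp_int[of j u v] by (intro exI[of _ u] exI[of _ v] exI[of _ "j"]) auto
  qed
qed

lemma no_Inl_Inl: "\<not> ES (Inl x) (Inl y)"
  using k2 unfolding subdiv_E_def sub_pos_def by (auto split: if_splits)

lemma ES_in_VS: "ES x y \<Longrightarrow> x \<in> VS \<and> y \<in> VS"
  unfolding subdiv_E_def using sp_in_VS by fastforce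

lemma ES_irrefl: "\<not> ES x x"
proof
  assume e: "ES x x"
  show False
  proof (cases x)
    case (Inl a) then show False using e no_Inl_Inl by simp
  next
    case (Inr p)
    then obtain u v j where x: "x = Inr (u, v, j)" by (cases p) auto
    have "x \<in> VS" using e ES_in_VS by blast
    hence a: "u < v" "E u v" "0 < j" "j < k" using x Inr_VS by auto
    have "x = sp u v (j - 1) \<or> x = sp u v (j + 1)" using ES_Inr[of u v j x] e x \<open>x \<in> VS\<close> by simp
    moreover have "x = sp u v j" using x a by (simp add: sp_int)
    ultimately show False using sp_inj[of u v] a by force
  qed
qed

lemma ES_sp:
  assumes "u < v" "E u v" "i \<le> k" "j \<le> k"
  shows "ES (sp u v i) (sp u v j) \<longleftrightarrow> (j = i + 1 \<or> i = j + 1)"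
proof -
  have uvne: "u \<noteq> v" using assms by simp
  have int: "ES (sp u v a) (sp u v b) \<longleftrightarrow> (b = a + 1 \<or> a = b + 1)"
    if ab: "0 < a" "a < k" "b \<le> k" for a b
  proof -
    have s: "sp u v a = Inr (u, v, a)" using ab by (simp add: sp_int)
    have m: "Inr (u, v, a) \<in> VS" using ab assms by (simp add: Inr_VS)
    have "ES (sp u v a) (sp u v b) \<longleftrightarrow> sp u v b = sp u v (a - 1) \<or> sp u v b = sp u v (a + 1)"
      unfolding s by (rule ES_Inr[OF m])
    also have "\<dots> \<longleftrightarrow> b = a - 1 \<or> b = a + 1"
      using sp_inj[OF uvne, of b "a - 1"] sp_inj[OF uvne, of b "a + 1"] ab by simp
    also have "\<dots> \<longleftrightarrow> (b = a + 1 \<or> a = b + 1)" using ab by auto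
    finally show ?thesis .
  qed
  show ?thesis
  proof (cases "0 < i \<and> i < k")
    case True then show ?thesis using int assms by simp
  next
    case F1: False
    show ?thesis
    proof (cases "0 < j \<and> j < k")
      case True then show ?thesis using int[of j i] assms ES_sym by auto
    next
      case False
      hence "i = 0 \<or> i = k" "j = 0 \<or> j = k" using F1 assms by auto
      then show ?thesis using no_Inl_Inl k2 by auto
    qed
  qed
qed

lemma finite_VS: "finite VS"
proof -
  have "VS \<subseteq> Inl ` V \<union> Inr ` (V \<times> V \<times> {0..<k})"
    unfolding subdiv_V_def using E_props by auto
  moreover have "finite (Inl ` V \<union> Inr ` (V \<times> V \<times> {0..<k}))" using finV by auto
  ultimately show ?thesis by (rule finite_subset)
qed

end

lemma path_nbhd: "j < n \<Longrightarrow> closed_nbhd (path_V n) (path_E n) j = {i. i < n \<and> (i = j + 1 \<or> j = i + 1 \<or> i = j)}"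
  unfolding closed_nbhd_def path_V_def path_E_def by auto

lemma self_nbhd: "w \<in> closed_nbhd V E w"
  unfolding closed_nbhd_def by auto

context subd begin

lemma outside_adj:
  assumes "u < v" "E u v" "w \<notin> sp u v ` {0..k}" "i \<le> k" "ES w (sp u v i)"
  shows "i = 0 \<or> i = k"
proof (rule ccontr)
  assume "\<not> (i = 0 \<or> i = k)"
  hence i: "0 < i" "i < k" using assms(4) by auto
  hence "sp u v i = Inr (u,v,i)" "Inr (u,v,i) \<in> VS" using assms Inr_VS by (auto simp: sp_int)
  hence "w = sp u v (i - 1) \<or> w = sp u v (i + 1)" using ES_Inr assms(5) ES_sym by metis
  moreover have "i - 1 \<in> {0..k}" "i + 1 \<in> {0..k}" using i by auto
  ultimately show False using assms(3) by blast
qed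

lemma outside_both:
  assumes "u < v" "E u v" "w \<notin> sp u v ` {0..k}" "ES w (Inl u)" "ES w (Inl v)"
  shows False
proof (cases w)
  case (Inl x) then show False using assms no_Inl_Inl by simp
next
  case (Inr p)
  then obtain u1 v1 j where w: "w = Inr (u1, v1, j)" by (cases p) auto
  have wV: "w \<in> VS" using assms ES_in_VS by blast
  hence a: "u1 < v1" "E u1 v1" "0 < j" "j < k" using w Inr_VS by auto
  have "Inl u = sp u1 v1 (j - 1) \<or> Inl u = sp u1 v1 (j + 1)"
       "Inl v = sp u1 v1 (j - 1) \<or> Inl v = sp u1 v1 (j + 1)"
    using ES_Inr[of u1 v1 j] wV assms(4,5) w by auto
  hence "u1 = u \<and> v1 = v" using a assms(1) unfolding sub_pos_def by (auto split: if_splits)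
  hence "w = sp u v j" using w a by (simp add: sp_int)
  moreover have "j \<in> {0..k}" using a by auto
  ultimately show False using assms(3) by blast
qed

lemma lower:
  assumes uv: "u < v" "E u v"
  shows "chi_dd (path_V (k+1)) (path_E (k+1)) \<le> chi_dd VS ES"
proof -
  define g where "g = sp u v"
  define Q where "Q = g ` {0..k}"
  define N where "N = closed_nbhd VS ES"
  obtain c where dc: "dom_coloring VS ES c" and cc: "card (c ` VS) = chi_dd VS ES"
    using chi_dd_attained[of VS ES] finite_VS ES_irrefl by blast
  define cls where "cls = color_class VS c"
  have propc: "\<And>x y. x \<in> VS \<Longrightarrow> y \<in> VS \<Longrightarrow> ES x y \<Longrightarrow> c x \<noteq> c y"
   and d1: "\<And>w. w \<in> VS \<Longrightarrow> \<exists>i\<in>c ` VS. cls i \<subseteq> N w"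
   and d2: "\<And>i. i \<in> c ` VS \<Longrightarrow> \<exists>w\<in>VS. cls i \<subseteq> N w"
    using dcD[OF dc] unfolding cls_def N_def by blast+
  have uvne: "u \<noteq> v" using uv by simp
  have g_in: "\<And>i. i \<le> k \<Longrightarrow> g i \<in> VS" using sp_in_VS uv g_def by simp
  have g_inj: "\<And>i j. i \<le> k \<Longrightarrow> j \<le> k \<Longrightarrow> g i = g j \<longleftrightarrow> i = j" using sp_inj uvne g_def by simp
  have g_adj: "\<And>i j. i \<le> k \<Longrightarrow> j \<le> k \<Longrightarrow> ES (g i) (g j) \<longleftrightarrow> (j = i+1 \<or> i = j+1)"
    using ES_sp uv g_def by simp
  have QI: "\<And>i. i \<le> k \<Longrightarrow> g i \<in> Q" unfolding Q_def by simp
  have QE: "\<And>x. x \<in> Q \<Longrightarrow> \<exists>i\<le>k. x = g i" unfolding Q_def by auto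
  have PV: "path_V (k+1) = {0..k}" unfolding path_V_def by auto
  let ?PN = "closed_nbhd (path_V (k+1)) (path_E (k+1))"
  have PN: "\<And>j. j \<le> k \<Longrightarrow> ?PN j = {i. i \<le> k \<and> (i = j + 1 \<or> j = i + 1 \<or> i = j)}"
    by (subst path_nbhd) auto
  have nb_corr: "\<And>j. j \<le> k \<Longrightarrow> {i. i \<le> k \<and> g i \<in> N (g j)} = ?PN j"
  proof -
    fix j assume j: "j \<le> k"
    have "g i \<in> N (g j) \<longleftrightarrow> (i = j+1 \<or> j = i+1 \<or> i = j)" if "i \<le> k" for i
      using g_adj[OF j that] g_inj[OF that j] g_in[OF that] unfolding N_def closed_nbhd_def by auto
    then show "{i. i \<le> k \<and> g i \<in> N (g j)} = ?PN j"
      using j PN by auto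
  qed
  have int_nb: "\<And>j. 0 < j \<Longrightarrow> j < k \<Longrightarrow> N (g j) \<subseteq> Q"
  proof -
    fix j assume j: "0 < j" "j < k"
    have gj: "g j = Inr (u,v,j)" "Inr (u,v,j) \<in> VS" using j uv g_def by (auto simp: sp_int Inr_VS)
    show "N (g j) \<subseteq> Q"
    proof
      fix x assume "x \<in> N (g j)"
      hence "x = g j \<or> ES (g j) x" unfolding N_def closed_nbhd_def by auto
      hence "x = g j \<or> x = g (j - 1) \<or> x = g (j + 1)" using ES_Inr[OF gj(2)] gj(1) g_def by auto
      moreover have "j \<le> k" "j - 1 \<le> k" "j + 1 \<le> k" using j by auto
      ultimately show "x \<in> Q" using QI by blast
    qed
  qed
  have outside1: "\<And>w i. w \<notin> Q \<Longrightarrow> i \<le> k \<Longrightarrow> ES w (g i) \<Longrightarrow> i = 0 \<or> i = k"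
    using outside_adj uv unfolding Q_def g_def by blast
  have outside2: "\<And>w. w \<notin> Q \<Longrightarrow> ES w (g 0) \<Longrightarrow> ES w (g k) \<Longrightarrow> False"
    using outside_both uv unfolding Q_def g_def by simp
  have cls_mem: "\<And>x \<gamma>. x \<in> cls \<gamma> \<longleftrightarrow> x \<in> VS \<and> c x = \<gamma>" unfolding cls_def color_class_def by auto
  have cls_ne: "\<And>\<gamma>. \<gamma> \<in> c ` VS \<Longrightarrow> cls \<gamma> \<noteq> {}" using cls_mem by auto

  obtain \<alpha>a where \<alpha>a: "\<alpha>a \<in> c ` VS" "cls \<alpha>a \<subseteq> N (g 0)" using d1[OF g_in[of 0]] by auto
  obtain \<alpha>b where \<alpha>b: "\<alpha>b \<in> c ` VS" "cls \<alpha>b \<subseteq> N (g k)" using d1[OF g_in[of k]] by auto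
  define Xa where "Xa \<longleftrightarrow> \<not>(\<exists>\<gamma>\<in>c ` VS. cls \<gamma> \<inter> Q \<noteq> {} \<and> cls \<gamma> \<subseteq> N (g 0))"
  define Xb where "Xb \<longleftrightarrow> \<not>(\<exists>\<gamma>\<in>c ` VS. cls \<gamma> \<inter> Q \<noteq> {} \<and> cls \<gamma> \<subseteq> N (g k))"
  have fa: "Xa \<Longrightarrow> cls \<alpha>a \<inter> Q = {}" using \<alpha>a Xa_def by blast
  have fb: "Xb \<Longrightarrow> cls \<alpha>b \<inter> Q = {}" using \<alpha>b Xb_def by blast
  have ab: "Xa \<Longrightarrow> Xb \<Longrightarrow> \<alpha>a \<noteq> \<alpha>b"
  proof
    assume XX: Xa Xb "\<alpha>a = \<alpha>b"
    obtain x where x: "x \<in> cls \<alpha>a" using cls_ne \<alpha>a by blast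
    have xQ: "x \<notin> Q" using fa x XX by blast
    hence "x \<noteq> g 0" "x \<noteq> g k" using QI by auto
    moreover have "x \<in> N (g 0)" "x \<in> N (g k)" using x \<alpha>a \<alpha>b XX by auto
    ultimately have "ES (g 0) x" "ES (g k) x" unfolding N_def closed_nbhd_def by auto
    thus False using outside2 xQ ES_sym by blast
  qed
  define c' where "c' i = (if i = 0 then (if Xa then \<alpha>a else c (g 0))
      else if i = k then (if Xb then \<alpha>b else c (g k)) else c (g i))" for i
  let ?PC = "color_class (path_V (k+1)) c'"
  have M3: "\<And>i \<gamma>. i \<le> k \<Longrightarrow> c' i = \<gamma> \<Longrightarrow> \<not> ((i = 0 \<and> Xa \<and> \<gamma> = \<alpha>a) \<or> (i = k \<and> Xb \<and> \<gamma> = \<alpha>b)) \<Longrightarrow> g i \<in> cls \<gamma>"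
    unfolding c'_def cls_mem using g_in by (auto split: if_splits)
  have M1: "\<And>i \<gamma>. i \<le> k \<Longrightarrow> c' i = \<gamma> \<Longrightarrow> cls \<gamma> \<inter> Q \<noteq> {} \<Longrightarrow> g i \<in> cls \<gamma>"
    using M3 fa fb by blast
  have M2: "\<And>i \<gamma>. i \<le> k \<Longrightarrow> g i \<in> cls \<gamma> \<Longrightarrow> (i = 0 \<longrightarrow> \<not>Xa) \<Longrightarrow> (i = k \<longrightarrow> \<not>Xb) \<Longrightarrow> c' i = \<gamma>"
    unfolding c'_def cls_mem by auto
  have img: "c' ` {0..k} \<subseteq> c ` VS" using \<alpha>a \<alpha>b g_in by (auto simp: c'_def)
  have PCmem: "\<And>i \<gamma>. i \<in> ?PC \<gamma> \<longleftrightarrow> i \<le> k \<and> c' i = \<gamma>" unfolding color_class_def PV by auto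
  have PCsub: "\<And>\<gamma>. cls \<gamma> \<inter> Q \<noteq> {} \<Longrightarrow> ?PC \<gamma> \<subseteq> {i. i \<le> k \<and> g i \<in> cls \<gamma>}"
    using M1 PCmem by blast
  have H: "\<And>\<gamma> j. j \<le> k \<Longrightarrow> cls \<gamma> \<inter> Q \<noteq> {} \<Longrightarrow> cls \<gamma> \<subseteq> N (g j) \<Longrightarrow> ?PC \<gamma> \<subseteq> ?PN j"
  proof -
    fix \<gamma> j assume a: "j \<le> k" "cls \<gamma> \<inter> Q \<noteq> {}" "cls \<gamma> \<subseteq> N (g j)"
    have "?PC \<gamma> \<subseteq> {i. i \<le> k \<and> g i \<in> N (g j)}" using PCsub[OF a(2)] a(3) by blast
    then show "?PC \<gamma> \<subseteq> ?PN j" using nb_corr[OF a(1)] by simp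
  qed
  have M2': "\<And>i \<gamma>. i \<le> k \<Longrightarrow> g i \<in> cls \<gamma> \<Longrightarrow> (i = 0 \<longrightarrow> \<not>Xa) \<Longrightarrow> (i = k \<longrightarrow> \<not>Xb) \<Longrightarrow> \<gamma> \<in> c' ` path_V (k+1)"
  proof -
    fix i \<gamma> assume a: "i \<le> k" "g i \<in> cls \<gamma>" "i = 0 \<longrightarrow> \<not>Xa" "i = k \<longrightarrow> \<not>Xb"
    hence "c' i = \<gamma>" by (rule M2)
    moreover have "i \<in> path_V (k+1)" using a(1) PV by auto
    ultimately show "\<gamma> \<in> c' ` path_V (k+1)" by blast
  qed
  have int_c': "\<And>i. 0 < i \<Longrightarrow> i < k \<Longrightarrow> c' i = c (g i)" unfolding c'_def by auto
  have k0: "k \<noteq> 0" using k2 by simp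

  have dom: "dom_coloring (path_V (k+1)) (path_E (k+1)) c'"
    unfolding dom_coloring_def
  proof (intro conjI ballI impI)
    fix i j assume ij: "i \<in> path_V (k+1)" "j \<in> path_V (k+1)" "path_E (k+1) i j"
    hence ij': "j = i+1 \<or> i = j+1" "i \<le> k" "j \<le> k" by (auto simp: path_E_def)
    show "c' i \<noteq> c' j"
    proof
      assume eq: "c' i = c' j"
      have "\<exists>t. (t = i \<or> t = j) \<and> 0 < t \<and> t < k"
        using ij'(1)
      proof
        assume h: "j = i + 1"
        show ?thesis
        proof (cases "i = 0")
          case True thus ?thesis using h k2 by (intro exI[of _ j]) simp
        next
          case False thus ?thesis using h ij'(3) by (intro exI[of _ i]) simp
        qed
      next
        assume h: "i = j + 1"
        show ?thesis
        proof (cases "j = 0")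
          case True thus ?thesis using h k2 by (intro exI[of _ i]) simp
        next
          case False thus ?thesis using h ij'(2) by (intro exI[of _ j]) simp
        qed
      qed
      then obtain t where t: "t = i \<or> t = j" "0 < t" "t < k" by blast
      have "g t \<in> cls (c' i)" using t eq int_c' g_in cls_mem by auto
      hence ne: "cls (c' i) \<inter> Q \<noteq> {}" using QI t by auto
      have "g i \<in> cls (c' i)" "g j \<in> cls (c' i)" using M1[OF ij'(2) refl ne] M1[OF ij'(3) eq[symmetric] ne] by auto
      hence "c (g i) = c (g j)" using cls_mem by auto
      moreover have "ES (g i) (g j)" using g_adj ij' by auto
      ultimately show False using propc g_in ij' by blast
    qed
  next
    fix j assume "j \<in> path_V (k+1)"
    hence j: "j \<le> k" using PV by auto
    show "\<exists>\<gamma>\<in>c' ` path_V (k+1). ?PC \<gamma> \<subseteq> ?PN j"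
    proof (cases "j = 0 \<or> j = k")
      case True
      show ?thesis
      proof (cases "(j = 0 \<and> Xa) \<or> (j = k \<and> Xb)")
        case X: True
        define \<gamma> where "\<gamma> = (if j = 0 then \<alpha>a else \<alpha>b)"
        have c'j: "c' j = \<gamma>" using X k0 unfolding \<gamma>_def c'_def by auto
        have "?PC \<gamma> \<subseteq> {j}"
        proof
          fix i assume "i \<in> ?PC \<gamma>"
          hence i: "i \<le> k" "c' i = \<gamma>" using PCmem by auto
          have e: "cls \<gamma> \<inter> Q = {}" using X fa fb k0 unfolding \<gamma>_def by auto
          have "(i = 0 \<and> Xa \<and> \<gamma> = \<alpha>a) \<or> (i = k \<and> Xb \<and> \<gamma> = \<alpha>b)"
            using M3[OF i] e QI i(1) by blast
          then show "i \<in> {j}" using X ab k0 unfolding \<gamma>_def by (auto split: if_splits)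
        qed
        moreover have "j \<in> path_V (k+1)" using j PV by auto
        moreover have "j \<in> ?PN j" by (rule self_nbhd)
        ultimately show ?thesis using c'j imageI[of j "path_V (k+1)" c'] by blast
      next
        case NX: False
        have jj: "j = 0 \<and> \<not> Xa \<or> j = k \<and> \<not> Xb" using True NX by auto
        then obtain \<gamma> where \<gamma>: "\<gamma> \<in> c ` VS" "cls \<gamma> \<inter> Q \<noteq> {}" "cls \<gamma> \<subseteq> N (g j)"
          unfolding Xa_def Xb_def by blast
        then obtain x where "x \<in> cls \<gamma>" "x \<in> Q" by blast
        then obtain i where i: "i \<le> k" "g i \<in> cls \<gamma>" using QE by blast
        hence "i \<in> ?PN j" using nb_corr[OF j] \<gamma>(3) by blast
        hence "i = j + 1 \<or> j = i + 1 \<or> i = j" using PN j by auto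
        hence "(i = 0 \<longrightarrow> \<not>Xa) \<and> (i = k \<longrightarrow> \<not>Xb)" using jj k2 by auto
        hence "\<gamma> \<in> c' ` path_V (k+1)" using M2' i by blast
        then show ?thesis using H[OF j \<gamma>(2,3)] by blast
      qed
    next
      case False
      hence j': "0 < j" "j < k" using j by auto
      obtain \<gamma> where \<gamma>: "\<gamma> \<in> c ` VS" "cls \<gamma> \<subseteq> N (g j)" using d1 g_in j by blast
      have sQ: "cls \<gamma> \<subseteq> Q" using \<gamma>(2) int_nb[OF j'] by blast
      have ne: "cls \<gamma> \<inter> Q \<noteq> {}" using sQ cls_ne[OF \<gamma>(1)] by blast
      show ?thesis
      proof (cases "j = 1 \<and> k = 2")
        case True
        have "?PC (c' 1) \<subseteq> ?PN j"
        proof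
          fix i assume "i \<in> ?PC (c' 1)"
          hence "i \<le> 2" using PCmem True by simp
          hence "i = j + 1 \<or> j = i + 1 \<or> i = j" using True by linarith
          then show "i \<in> ?PN j" using PN[OF j] True \<open>i \<le> 2\<close> by simp
        qed
        moreover have "(1::nat) \<in> path_V (k+1)" using PV True by simp
        ultimately show ?thesis by blast
      next
        case jk: False
        have "\<exists>i. i \<le> k \<and> g i \<in> cls \<gamma> \<and> (i = 0 \<longrightarrow> \<not>Xa) \<and> (i = k \<longrightarrow> \<not>Xb)"
        proof -
          obtain x where "x \<in> cls \<gamma>" using ne by blast
          then obtain i where i: "i \<le> k" "g i \<in> cls \<gamma>" using QE sQ by blast
          hence "i \<in> ?PN j" using nb_corr[OF j] \<gamma>(2) by blast
          hence ij: "i = j + 1 \<or> j = i + 1 \<or> i = j" using PN j by auto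
          have sub3: "\<And>y. y \<in> cls \<gamma> \<Longrightarrow> \<exists>i'. i' \<le> k \<and> y = g i' \<and> (i' = j + 1 \<or> j = i' + 1 \<or> i' = j)"
          proof -
            fix y assume y: "y \<in> cls \<gamma>"
            then obtain i' where i': "i' \<le> k" "y = g i'" using QE sQ by blast
            hence "i' \<in> ?PN j" using nb_corr[OF j] \<gamma>(2) y by blast
            thus "\<exists>i'. i' \<le> k \<and> y = g i' \<and> (i' = j + 1 \<or> j = i' + 1 \<or> i' = j)" using PN j i' by auto
          qed
          show ?thesis
          proof (cases "0 < i \<and> i < k")
            case True then show ?thesis using i by (intro exI[of _ i]) auto
          next
            case False
            hence "i = 0 \<or> i = k" using i by auto
            then show ?thesis
            proof
              assume i0: "i = 0"
              hence j1: "j = 1" "k \<ge> 3" using ij jk j' by auto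
              show ?thesis
              proof (cases "g 2 \<in> cls \<gamma>")
                case True then show ?thesis using j1 by (intro exI[of _ 2]) auto
              next
                case False
                have "cls \<gamma> \<subseteq> {g 0}"
                proof
                  fix y assume y: "y \<in> cls \<gamma>"
                  then obtain i' where i': "i' \<le> k" "y = g i'" "i' = 2 \<or> i' = 0 \<or> i' = 1"
                    using sub3 j1 by fastforce
                  have "i' \<noteq> 1"
                  proof
                    assume "i' = 1"
                    hence "c (g 1) = c (g 0)" using y i' i i0 cls_mem by auto
                    moreover have "ES (g 0) (g 1)" using g_adj j1 by auto
                    moreover have "(0::nat) \<le> k" "(1::nat) \<le> k" using j1 by auto
                    ultimately show False using propc[OF g_in[of 0] g_in[of 1]] by auto
                  qed
                  then show "y \<in> {g 0}" using i' False y by auto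
                qed
                hence "cls \<gamma> \<subseteq> N (g 0)" using self_nbhd[of "g 0" VS ES] unfolding N_def by blast
                hence "\<not> Xa" using \<gamma>(1) ne unfolding Xa_def by blast
                then show ?thesis using i i0 k0 by auto
              qed
            next
              assume ik: "i = k"
              hence j1: "j = k - 1" "k \<ge> 3" using ij jk j' by auto
              show ?thesis
              proof (cases "g (k - 2) \<in> cls \<gamma>")
                case True then show ?thesis using j1 by (intro exI[of _ "k - 2"]) auto
              next
                case False
                have "cls \<gamma> \<subseteq> {g k}"
                proof
                  fix y assume y: "y \<in> cls \<gamma>"
                  then obtain i' where i': "i' \<le> k" "y = g i'" "i' = k - 2 \<or> i' = k \<or> i' = k - 1"
                    using sub3 j1 by fastforce
                  have "i' \<noteq> k - 1"
                  proof
                    assume "i' = k - 1"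
                    hence "c (g (k - 1)) = c (g k)" using y i' i ik cls_mem by auto
                    moreover have "ES (g (k - 1)) (g k)" using g_adj j1 by auto
                    moreover have "k - 1 \<le> k" by simp
                    ultimately show False using propc[OF g_in[of "k - 1"] g_in[of k]] by auto
                  qed
                  then show "y \<in> {g k}" using i' False y by auto
                qed
                hence "cls \<gamma> \<subseteq> N (g k)" using self_nbhd[of "g k" VS ES] unfolding N_def by blast
                hence "\<not> Xb" using \<gamma>(1) ne unfolding Xb_def by blast
                then show ?thesis using i ik k0 by auto
              qed
            qed
          qed
        qed
        then obtain i where "i \<le> k" "g i \<in> cls \<gamma>" "i = 0 \<longrightarrow> \<not>Xa" "i = k \<longrightarrow> \<not>Xb" by blast
        hence "\<gamma> \<in> c' ` path_V (k+1)" using M2' by blast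
        then show ?thesis using H[OF j ne \<gamma>(2)] by blast
      qed
    qed
  next
    fix \<gamma> assume "\<gamma> \<in> c' ` path_V (k+1)"
    show "\<exists>w\<in>path_V (k+1). ?PC \<gamma> \<subseteq> ?PN w"
    proof (cases "cls \<gamma> \<inter> Q = {}")
      case e: True
      have A: "\<And>i. i \<in> ?PC \<gamma> \<Longrightarrow> (i = 0 \<and> Xa \<and> \<gamma> = \<alpha>a) \<or> (i = k \<and> Xb \<and> \<gamma> = \<alpha>b)"
      proof -
        fix i assume "i \<in> ?PC \<gamma>"
        hence i: "i \<le> k" "c' i = \<gamma>" using PCmem by auto
        have "g i \<notin> cls \<gamma>" using e QI[OF i(1)] by blast
        thus "(i = 0 \<and> Xa \<and> \<gamma> = \<alpha>a) \<or> (i = k \<and> Xb \<and> \<gamma> = \<alpha>b)" using M3[OF i] by blast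
      qed
      show ?thesis
      proof (cases "0 \<in> ?PC \<gamma>")
        case True
        hence "?PC \<gamma> \<subseteq> {0}" using A ab by blast
        hence "?PC \<gamma> \<subseteq> ?PN 0" using self_nbhd[of 0 "path_V (k+1)" "path_E (k+1)"] by blast
        moreover have "0 \<in> path_V (k+1)" using PV by auto
        ultimately show ?thesis by blast
      next
        case False
        hence "?PC \<gamma> \<subseteq> {k}" using A by blast
        hence "?PC \<gamma> \<subseteq> ?PN k" using self_nbhd[of k "path_V (k+1)" "path_E (k+1)"] by blast
        moreover have "k \<in> path_V (k+1)" using PV by auto
        ultimately show ?thesis by blast
      qed
    next
      case ne: False
      then obtain x where "x \<in> cls \<gamma>" by blast
      hence "\<gamma> \<in> c ` VS" using cls_mem by auto
      then obtain w where w: "w \<in> VS" "cls \<gamma> \<subseteq> N w" using d2 by blast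
      show ?thesis
      proof (cases "w \<in> Q")
        case True
        then obtain j where j: "j \<le> k" "w = g j" using QE by blast
        have "?PC \<gamma> \<subseteq> ?PN j" using H[OF j(1) ne] w j by simp
        moreover have "j \<in> path_V (k+1)" using PV j by simp
        ultimately show ?thesis by blast
      next
        case False
        have B: "\<And>i. i \<in> ?PC \<gamma> \<Longrightarrow> (i = 0 \<or> i = k) \<and> ES w (g i)"
        proof -
          fix i assume "i \<in> ?PC \<gamma>"
          hence i: "i \<le> k" "g i \<in> cls \<gamma>" using PCsub[OF ne] by auto
          hence "g i \<in> N w" using w by blast
          moreover have "g i \<noteq> w" using False QI i by auto
          ultimately have "ES w (g i)" unfolding N_def closed_nbhd_def by auto
          then show "(i = 0 \<or> i = k) \<and> ES w (g i)" using outside1 False i by blast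
        qed
        show ?thesis
        proof (cases "0 \<in> ?PC \<gamma>")
          case True
          have "k \<notin> ?PC \<gamma>"
          proof
            assume "k \<in> ?PC \<gamma>"
            hence "ES w (g k)" "ES w (g 0)" using B True by blast+
            thus False using outside2 False by blast
          qed
          hence "?PC \<gamma> \<subseteq> {0}" using B by blast
          hence "?PC \<gamma> \<subseteq> ?PN 0" using self_nbhd[of 0 "path_V (k+1)" "path_E (k+1)"] by blast
          moreover have "0 \<in> path_V (k+1)" using PV by auto
          ultimately show ?thesis by blast
        next
          case F2: False
          hence "?PC \<gamma> \<subseteq> {k}" using B by blast
          hence "?PC \<gamma> \<subseteq> ?PN k" using self_nbhd[of k "path_V (k+1)" "path_E (k+1)"] by blast
          moreover have "k \<in> path_V (k+1)" using PV by auto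
          ultimately show ?thesis by blast
        qed
      qed
    qed
  qed
  have "chi_dd (path_V (k+1)) (path_E (k+1)) \<le> card (c' ` path_V (k+1))" by (rule chi_dd_le[OF dom])
  also have "\<dots> \<le> card (c ` VS)" using img PV finite_VS by (intro card_mono) auto
  finally show ?thesis using cc by simp
qed

end

lemma path_nbhd': "j < n \<Longrightarrow> closed_nbhd (path_V n) (path_E n) j = {i. i < n \<and> (i = j + 1 \<or> j = i + 1 \<or> i = j)}"
  unfolding closed_nbhd_def path_V_def path_E_def by auto

lemma path_irrefl: "\<not> path_E n i i" unfolding path_E_def by auto

lemma finite_path_V: "finite (path_V n)" unfolding path_V_def by simp

lemma path_mono:
  assumes n1: "1 \<le> n"
  shows "chi_dd (path_V n) (path_E n) \<le> chi_dd (path_V (n+1)) (path_E (n+1))"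
proof -
  obtain c where dc: "dom_coloring (path_V (n+1)) (path_E (n+1)) c"
    and cc: "card (c ` path_V (n+1)) = chi_dd (path_V (n+1)) (path_E (n+1))"
    using chi_dd_attained[of "path_V (n+1)" "path_E (n+1)"] finite_path_V path_irrefl by blast
  define PV where "PV = path_V (n+1)"
  have PV: "PV = {0..n}" unfolding PV_def path_V_def by auto
  define C where "C = color_class PV c"
  define N' where "N' = closed_nbhd PV (path_E (n+1))"
  have N': "\<And>w. w \<le> n \<Longrightarrow> N' w = {i. i \<le> n \<and> (i = w + 1 \<or> w = i + 1 \<or> i = w)}"
    unfolding N'_def PV_def by (subst path_nbhd') auto
  have Cmem: "\<And>x \<gamma>. x \<in> C \<gamma> \<longleftrightarrow> x \<le> n \<and> c x = \<gamma>" unfolding C_def color_class_def PV by auto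
  have propc: "\<And>x y. x \<le> n \<Longrightarrow> y \<le> n \<Longrightarrow> (y = x + 1 \<or> x = y + 1) \<Longrightarrow> c x \<noteq> c y"
  proof -
    fix x y assume a: "x \<le> n" "y \<le> n" "y = x + 1 \<or> x = y + 1"
    have "x \<in> path_V (n+1)" "y \<in> path_V (n+1)" "path_E (n+1) x y"
      using a unfolding path_V_def path_E_def by auto
    then show "c x \<noteq> c y" by (rule dcD(1)[OF dc])
  qed
  have d1': "\<And>w. w \<in> PV \<Longrightarrow> \<exists>\<gamma>\<in>c ` PV. C \<gamma> \<subseteq> N' w"
    using dcD(2)[OF dc] unfolding PV_def C_def N'_def by blast
  have d1: "\<And>w. w \<le> n \<Longrightarrow> \<exists>\<gamma>\<in>c ` PV. C \<gamma> \<subseteq> N' w"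
    using d1' unfolding PV by simp
  have d2': "\<And>\<gamma>. \<gamma> \<in> c ` PV \<Longrightarrow> \<exists>w\<in>PV. C \<gamma> \<subseteq> N' w"
    using dcD(3)[OF dc] unfolding PV_def C_def N'_def by blast
  have d2: "\<And>\<gamma>. \<gamma> \<in> c ` PV \<Longrightarrow> \<exists>w\<le>n. C \<gamma> \<subseteq> N' w"
  proof -
    fix \<gamma> assume "\<gamma> \<in> c ` PV"
    from d2'[OF this] obtain w where "w \<in> PV" "C \<gamma> \<subseteq> N' w" by blast
    thus "\<exists>w\<le>n. C \<gamma> \<subseteq> N' w" unfolding PV by auto
  qed
  have c01: "c 0 \<noteq> c 1" using propc n1 by auto
  define U where "U \<longleftrightarrow> (\<forall>j\<in>{1..n}. c j \<noteq> c 0)"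
  define h where "h x = (if x = 1 then (if U then c 0 else c 1) else c x)" for x
  define A where "A = {1..n::nat}"
  define H where "H = color_class A h"
  define Nn where "Nn = closed_nbhd A (path_E (n+1))"
  have Hmem: "\<And>x \<gamma>. x \<in> H \<gamma> \<longleftrightarrow> 1 \<le> x \<and> x \<le> n \<and> h x = \<gamma>" unfolding H_def color_class_def A_def by auto
  have Nn: "\<And>w. 1 \<le> w \<Longrightarrow> w \<le> n \<Longrightarrow> Nn w = N' w \<inter> {1..n}"
    unfolding Nn_def N'_def closed_nbhd_def A_def PV_def path_V_def by auto
  have HU: "H (c 0) \<subseteq> {1}" if U: U
  proof
    fix y assume y: "y \<in> H (c 0)"
    hence y': "1 \<le> y" "y \<le> n" "h y = c 0" using Hmem by auto
    show "y \<in> {1}"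
    proof (rule ccontr)
      assume "y \<notin> {1}"
      hence "c y = c 0" using y' unfolding h_def by simp
      moreover have "y \<in> {1..n}" using y' by simp
      ultimately show False using U unfolding U_def by blast
    qed
  qed
  have HC: "\<And>\<gamma>. \<not> (U \<and> \<gamma> = c 0) \<Longrightarrow> H \<gamma> \<subseteq> C \<gamma>"
    using Hmem Cmem unfolding h_def by (auto split: if_splits)
  have self: "\<And>w. 1 \<le> w \<Longrightarrow> w \<le> n \<Longrightarrow> w \<in> Nn w" unfolding Nn_def closed_nbhd_def by auto
  have hA: "\<And>x. 1 \<le> x \<Longrightarrow> x \<le> n \<Longrightarrow> h x \<in> h ` A" unfolding A_def by auto
  have dom: "dom_coloring A (path_E (n+1)) h"
    unfolding dom_coloring_def H_def[symmetric] Nn_def[symmetric]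
  proof (intro conjI ballI impI)
    fix x y assume a: "x \<in> A" "y \<in> A" "path_E (n+1) x y"
    hence a': "1 \<le> x" "x \<le> n" "1 \<le> y" "y \<le> n" "y = x + 1 \<or> x = y + 1"
      unfolding A_def path_E_def by auto
    show "h x \<noteq> h y"
    proof (cases "x = 1 \<or> y = 1")
      case True
      hence xy: "(x = 1 \<and> y = 2) \<or> (x = 2 \<and> y = 1)" using a' by auto
      hence n2: "2 \<le> n" using a' by auto
      have h2: "h 2 = c 2" unfolding h_def by simp
      have "h 1 \<noteq> h 2"
      proof (cases U)
        case True
        hence "h 1 = c 0" unfolding h_def by simp
        moreover have "c 2 \<noteq> c 0" using True n2 unfolding U_def by auto
        ultimately show ?thesis using h2 by simp
      next
        case False
        hence "h 1 = c 1" unfolding h_def by simp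
        moreover have "c 1 \<noteq> c 2" using propc[of 1 2] n2 by simp
        ultimately show ?thesis using h2 by simp
      qed
      then show ?thesis using xy by auto
    next
      case False
      then show ?thesis using a' propc[of x y] unfolding h_def by auto
    qed
  next
    fix x assume "x \<in> A"
    hence x: "1 \<le> x" "x \<le> n" unfolding A_def by auto
    show "\<exists>\<gamma>\<in>h ` A. H \<gamma> \<subseteq> Nn x"
    proof (cases "x = 1 \<or> (x = 2 \<and> U)")
      case xcase: True
      show ?thesis
      proof (cases U)
        case True
        have "H (c 0) \<subseteq> Nn x"
        proof -
          have "1 \<in> Nn x" using xcase x Nn N' by auto
          thus ?thesis using HU True by blast
        qed
        moreover have "c 0 = h 1" using True unfolding h_def by simp
        moreover have "h 1 \<in> h ` A" using hA[of 1] n1 by simp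
        ultimately show ?thesis by metis
      next
        case False
        hence x1: "x = 1" using xcase by auto
        obtain j where j: "1 \<le> j" "j \<le> n" "c j = c 0" using False unfolding U_def by auto
        have "c 0 \<in> c ` PV" using PV by auto
        then obtain w where w: "w \<le> n" "C (c 0) \<subseteq> N' w" using d2 by blast
        have "0 \<in> C (c 0)" "j \<in> C (c 0)" using Cmem j by auto
        hence "0 \<in> N' w" "j \<in> N' w" using w by auto
        hence jw: "w \<le> 1" "j \<le> w + 1" using N' w(1) by auto
        have "j \<noteq> 1" using c01 j by auto
        hence j2: "j = 2" "w = 1" using jw j by auto
        have CN: "C (c 0) \<subseteq> {0,1,2}" using w N' j2 by auto
        have "H (c 2) \<subseteq> {2}"
        proof
          fix y assume "y \<in> H (c 2)"
          hence y: "1 \<le> y" "y \<le> n" "h y = c 2" using Hmem by auto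
          show "y \<in> {2}"
          proof (cases "y = 1")
            case True
            hence "c 1 = c 2" using y False unfolding h_def by simp
            thus ?thesis using propc[of 1 2] j j2 by auto
          next
            case F: False
            hence "c y = c 0" using y j j2 unfolding h_def by simp
            hence "y \<in> C (c 0)" using Cmem y by auto
            thus ?thesis using CN F y by auto
          qed
        qed
        moreover have "2 \<in> Nn x" using x1 j j2 Nn N' by auto
        moreover have "h 2 = c 2" unfolding h_def by simp
        moreover have "h 2 \<in> h ` A" using hA[of 2] j j2 by simp
        ultimately have "H (h 2) \<subseteq> Nn x" "h 2 \<in> h ` A" by auto
        thus ?thesis by blast
      qed
    next
      case xcase: False
      obtain \<gamma> where \<gamma>: "\<gamma> \<in> c ` PV" "C \<gamma> \<subseteq> N' x" using d1 x by blast
      have n0: "0 \<notin> N' x" using N' x xcase by auto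
      have notU: "\<not> (U \<and> \<gamma> = c 0)"
      proof
        assume "U \<and> \<gamma> = c 0"
        hence "0 \<in> C \<gamma>" using Cmem by auto
        thus False using n0 \<gamma> by auto
      qed
      have "H \<gamma> \<subseteq> Nn x" using HC[OF notU] \<gamma>(2) Nn[OF x] Hmem by auto
      moreover have "\<gamma> \<in> h ` A"
      proof -
        obtain y where y: "y \<in> C \<gamma>" using \<gamma>(1) Cmem PV by auto
        hence y': "y \<le> n" "c y = \<gamma>" "y \<in> N' x" using Cmem \<gamma> by auto
        have "y \<noteq> 0" using y'(3) n0 by (cases "y = 0") auto
        show ?thesis
        proof (cases "y = 1")
          case True
          hence "x \<le> 2" using y' N' x by auto
          hence "\<not> U" using xcase x by auto
          hence "h 1 = \<gamma>" using True y' unfolding h_def by simp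
          moreover have "h 1 \<in> h ` A" using hA[of 1] n1 by simp
          ultimately show ?thesis by simp
        next
          case False
          hence "h y = \<gamma>" using y' unfolding h_def by simp
          moreover have "h y \<in> h ` A" using hA[of y] y' \<open>y \<noteq> 0\<close> by simp
          ultimately show ?thesis by simp
        qed
      qed
      ultimately show ?thesis by blast
    qed
  next
    fix \<gamma> assume g: "\<gamma> \<in> h ` A"
    show "\<exists>w\<in>A. H \<gamma> \<subseteq> Nn w"
    proof (cases "U \<and> \<gamma> = c 0")
      case True
      hence "H \<gamma> \<subseteq> Nn 1" using HU self[of 1] n1 by auto
      thus ?thesis using n1 unfolding A_def by auto
    next
      case False
      have "\<gamma> \<in> c ` PV" using g unfolding h_def A_def PV by (auto split: if_splits)
      then obtain w where w: "w \<le> n" "C \<gamma> \<subseteq> N' w" using d2 by blast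
      have HC': "H \<gamma> \<subseteq> C \<gamma> \<inter> {1..n}" using HC[OF False] Hmem by auto
      show ?thesis
      proof (cases "w = 0")
        case True
        have "N' w \<inter> {1..n} \<subseteq> {1}" using N' True by auto
        hence "H \<gamma> \<subseteq> Nn 1" using HC' w self[of 1] n1 by auto
        thus ?thesis using n1 unfolding A_def by auto
      next
        case False
        hence "H \<gamma> \<subseteq> Nn w" using HC' w Nn[of w] by auto
        thus ?thesis using False w unfolding A_def by auto
      qed
    qed
  qed
  define d where "d i = h (i + 1)" for i
  have iso: "dom_coloring (path_V n) (path_E n) d \<and> d ` (path_V n) = h ` A"
  proof (rule dom_coloring_iso[OF dom])
    show "bij_betw (\<lambda>x. x - 1) A (path_V n)"
      unfolding A_def path_V_def
    proof (unfold bij_betw_def, intro conjI)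
      show "inj_on (\<lambda>x. x - 1) {1..n}" by (auto simp: inj_on_def)
      show "(\<lambda>x. x - 1) ` {1..n} = {0..<n}"
      proof
        show "(\<lambda>x. x - 1) ` {1..n} \<subseteq> {0..<n}" by auto
        show "{0..<n} \<subseteq> (\<lambda>x. x - 1) ` {1..n}"
        proof
          fix y assume "y \<in> {0..<(n::nat)}"
          hence "y = (y + 1) - 1" "y + 1 \<in> {1..n}" by auto
          thus "y \<in> (\<lambda>x. x - 1) ` {1..n}" by blast
        qed
      qed
    qed
    show "\<And>a b. a \<in> A \<Longrightarrow> b \<in> A \<Longrightarrow> path_E n (a - 1) (b - 1) \<longleftrightarrow> path_E (n+1) a b"
      unfolding A_def path_E_def by auto
    show "\<And>a. a \<in> A \<Longrightarrow> d (a - 1) = h a" unfolding A_def d_def by auto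
  qed
  have "chi_dd (path_V n) (path_E n) \<le> card (d ` path_V n)" by (rule chi_dd_le) (use iso in blast)
  also have "\<dots> \<le> card (c ` PV)"
  proof (rule card_mono)
    show "finite (c ` PV)" using PV by simp
    show "d ` path_V n \<subseteq> c ` PV" using iso unfolding h_def A_def PV by (auto split: if_splits)
  qed
  finally show ?thesis using cc PV_def by simp
qed


context subd begin

lemma seg_fwd:
  assumes uv: "u < v" "E u v" and dcX: "dom_coloring (path_V n) (path_E n) cX"
    and sn: "s + n \<le> k + 1"
    and col: "\<And>i. i < n \<Longrightarrow> d (sp u v (s + i)) = cX i"
  shows "dom_coloring (sp u v ` {s..<s+n}) ES d \<and> d ` (sp u v ` {s..<s+n}) = cX ` path_V n"
proof (rule dom_coloring_iso[OF dcX])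
  have uvne: "u \<noteq> v" using uv by simp
  have img: "(\<lambda>i. sp u v (s + i)) ` {0..<n} = sp u v ` {s..<s+n}"
  proof
    show "(\<lambda>i. sp u v (s + i)) ` {0..<n} \<subseteq> sp u v ` {s..<s+n}" by auto
    show "sp u v ` {s..<s+n} \<subseteq> (\<lambda>i. sp u v (s + i)) ` {0..<n}"
    proof
      fix z assume "z \<in> sp u v ` {s..<s+n}"
      then obtain j where j: "j \<in> {s..<s+n}" "z = sp u v j" by blast
      hence "j - s \<in> {0..<n}" "z = sp u v (s + (j - s))" by auto
      thus "z \<in> (\<lambda>i. sp u v (s + i)) ` {0..<n}" by blast
    qed
  qed
  show "bij_betw (\<lambda>i. sp u v (s + i)) (path_V n) (sp u v ` {s..<s+n})"
    unfolding bij_betw_def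
  proof
    show "inj_on (\<lambda>i. sp u v (s + i)) (path_V n)"
    proof (rule inj_onI)
      fix a b assume ab: "a \<in> path_V n" "b \<in> path_V n" "sp u v (s + a) = sp u v (s + b)"
      hence "s + a \<le> k" "s + b \<le> k" using sn unfolding path_V_def by auto
      hence "s + a = s + b" using sp_inj[OF uvne] ab(3) by blast
      thus "a = b" by simp
    qed
    show "(\<lambda>i. sp u v (s + i)) ` path_V n = sp u v ` {s..<s+n}"
      unfolding path_V_def using img by simp
  qed
  show "\<And>a b. a \<in> path_V n \<Longrightarrow> b \<in> path_V n \<Longrightarrow> ES (sp u v (s + a)) (sp u v (s + b)) \<longleftrightarrow> path_E n a b"
  proof -
    fix a b assume ab: "a \<in> path_V n" "b \<in> path_V n"
    hence "s + a \<le> k" "s + b \<le> k" using sn unfolding path_V_def by auto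
    hence "ES (sp u v (s + a)) (sp u v (s + b)) \<longleftrightarrow> (s + b = s + a + 1 \<or> s + a = s + b + 1)"
      by (rule ES_sp[OF uv])
    also have "\<dots> \<longleftrightarrow> path_E n a b" using ab unfolding path_E_def path_V_def by auto
    finally show "ES (sp u v (s + a)) (sp u v (s + b)) \<longleftrightarrow> path_E n a b" .
  qed
  show "\<And>a. a \<in> path_V n \<Longrightarrow> d (sp u v (s + a)) = cX a" using col unfolding path_V_def by auto
qed

lemma seg_bwd:
  assumes uv: "u < v" "E u v" and dcX: "dom_coloring (path_V k) (path_E k) cX"
    and col: "\<And>i. i < k \<Longrightarrow> d (sp u v (k - i)) = cX i"
  shows "dom_coloring (sp u v ` {1..k}) ES d \<and> d ` (sp u v ` {1..k}) = cX ` path_V k"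
proof (rule dom_coloring_iso[OF dcX])
  have uvne: "u \<noteq> v" using uv by simp
  have img: "(\<lambda>i. sp u v (k - i)) ` {0..<k} = sp u v ` {1..k}"
  proof -
    have "(\<lambda>i. sp u v (k - i)) ` {0..<k} = sp u v ` ((\<lambda>i. k - i) ` {0..<k})" by (simp add: image_image)
    also have "(\<lambda>i. k - i) ` {0..<k} = {1..k}"
    proof
      show "(\<lambda>i. k - i) ` {0..<k} \<subseteq> {1..k}" by auto
      show "{1..k} \<subseteq> (\<lambda>i. k - i) ` {0..<k}"
      proof
        fix x assume "x \<in> {1..k}"
        hence "x = k - (k - x)" "k - x \<in> {0..<k}" by auto
        thus "x \<in> (\<lambda>i. k - i) ` {0..<k}" by blast
      qed
    qed
    finally show ?thesis .
  qed
  show "bij_betw (\<lambda>i. sp u v (k - i)) (path_V k) (sp u v ` {1..k})"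
    unfolding bij_betw_def
  proof
    show "inj_on (\<lambda>i. sp u v (k - i)) (path_V k)"
    proof (rule inj_onI)
      fix a b assume ab: "a \<in> path_V k" "b \<in> path_V k" "sp u v (k - a) = sp u v (k - b)"
      hence "a < k" "b < k" unfolding path_V_def by auto
      moreover have "k - a = k - b" using sp_inj[OF uvne, of "k - a" "k - b"] ab(3) by simp
      ultimately show "a = b" by simp
    qed
    show "(\<lambda>i. sp u v (k - i)) ` path_V k = sp u v ` {1..k}"
      unfolding path_V_def using img by simp
  qed
  show "\<And>a b. a \<in> path_V k \<Longrightarrow> b \<in> path_V k \<Longrightarrow> ES (sp u v (k - a)) (sp u v (k - b)) \<longleftrightarrow> path_E k a b"
  proof -
    fix a b assume ab: "a \<in> path_V k" "b \<in> path_V k"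
    hence "a < k" "b < k" unfolding path_V_def by auto
    have "ES (sp u v (k - a)) (sp u v (k - b)) \<longleftrightarrow> (k - b = k - a + 1 \<or> k - a = k - b + 1)"
      by (rule ES_sp[OF uv]) auto
    also have "\<dots> \<longleftrightarrow> path_E k a b" using \<open>a < k\<close> \<open>b < k\<close> unfolding path_E_def by auto
    finally show "ES (sp u v (k - a)) (sp u v (k - b)) \<longleftrightarrow> path_E k a b" .
  qed
  show "\<And>a. a \<in> path_V k \<Longrightarrow> d (sp u v (k - a)) = cX a" using col unfolding path_V_def by auto
qed

lemma VS_cases:
  assumes "z \<in> VS"
  obtains (Inl) x where "z = Inl x" "x \<in> V"
  | (Inr) u v i where "z = Inr (u, v, i)" "u < v" "E u v" "0 < i" "i < k"
  using assms unfolding subdiv_V_def by auto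

lemma upper:
  assumes conn: "connected_graph V E" and e0: "u0 < v0" "E u0 v0"
  shows "chi_dd VS ES \<le> (card {(u,v). u < v \<and> E u v} - 1) * chi_dd (path_V k) (path_E k)
            + chi_dd (path_V (k+1)) (path_E (k+1))"
proof -
  define J where "J = {(u,v). u < v \<and> E u v}"
  define p where "p = chi_dd (path_V k) (path_E k)"
  define q where "q = chi_dd (path_V (k+1)) (path_E (k+1))"
  have finJ: "finite J"
  proof -
    have "J \<subseteq> V \<times> V" unfolding J_def using E_props by auto
    moreover have "finite (V \<times> V)" using finV by simp
    ultimately show ?thesis by (rule finite_subset)
  qed
  have e0J: "(u0, v0) \<in> J" unfolding J_def using e0 by simp
  have u0V: "u0 \<in> V" "v0 \<in> V" "u0 \<noteq> v0" using E_props[OF e0(2)] by auto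
  define rank where "rank x = (LEAST n. (E ^^ n) u0 x)" for x
  have reach: "\<And>x. x \<in> V \<Longrightarrow> \<exists>n. (E ^^ n) u0 x"
  proof -
    fix x assume "x \<in> V"
    hence "E\<^sup>*\<^sup>* u0 x" using conn u0V unfolding connected_graph_def by blast
    thus "\<exists>n. (E ^^ n) u0 x" by (rule rtranclp_imp_relpowp)
  qed
  define V0 where "V0 = V - {u0, v0}"
  have par_ex: "\<exists>y. E y x \<and> rank y < rank x" if x: "x \<in> V0" for x
  proof -
    have "\<exists>n. (E ^^ n) u0 x" using reach[of x] x unfolding V0_def by blast
    from LeastI_ex[OF this] have xr: "(E ^^ rank x) u0 x" unfolding rank_def .
    have "rank x \<noteq> 0"
    proof
      assume "rank x = 0"
      hence "x = u0" using xr by simp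
      thus False using x unfolding V0_def by simp
    qed
    then obtain r where r: "rank x = Suc r" by (cases "rank x") auto
    hence "(E ^^ Suc r) u0 x" using xr by simp
    then obtain y where y: "(E ^^ r) u0 y" "E y x" by (rule relpowp_Suc_E)
    have "rank y \<le> r" unfolding rank_def by (rule Least_le) (rule y(1))
    thus ?thesis using y r by auto
  qed
  define par where "par x = (SOME y. E y x \<and> rank y < rank x)" for x
  have par: "E (par x) x \<and> rank (par x) < rank x" if "x \<in> V0" for x
    using someI_ex[OF par_ex[OF that]] unfolding par_def .
  have parV: "par x \<in> V" "par x \<noteq> x" "E x (par x)" if "x \<in> V0" for x
    using E_props par[OF that] by auto
  define te where "te x = (min x (par x), max x (par x))" for x
  have teJ: "te x \<in> J" if "x \<in> V0" for x
  proof (cases "x < par x")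
    case True then show ?thesis using parV[OF that] unfolding te_def J_def by (auto simp: min_def max_def)
  next
    case False
    hence "par x < x" using parV[OF that] by auto
    then show ?thesis using par[OF that] unfolding te_def J_def by (auto simp: min_def max_def)
  qed
  have te_cases: "te x = (x, par x) \<and> x < par x \<or> te x = (par x, x) \<and> par x < x" if "x \<in> V0" for x
    using parV[OF that] unfolding te_def by (auto simp: min_def max_def)
  have te_ne: "te x \<noteq> (u0, v0)" if "x \<in> V0" for x
    using te_cases[OF that] that unfolding V0_def by auto
  have te_inj: "inj_on te V0"
  proof (rule inj_onI)
    fix x y assume xy: "x \<in> V0" "y \<in> V0" "te x = te y"
    show "x = y"
    proof (rule ccontr)
      assume "x \<noteq> y"
      have sx: "{fst (te x), snd (te x)} = {x, par x}" for x unfolding te_def by (auto simp: min_def max_def)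
      have "{x, par x} = {y, par y}" using sx[of x] sx[of y] xy(3) by metis
      hence "x = y \<and> par x = par y \<or> x = par y \<and> par x = y" by (simp only: doubleton_eq_iff)
      with \<open>x \<noteq> y\<close> have a: "x = par y" "par x = y" by blast+
      have r1: "rank y < rank x" using par[OF xy(1)] a(2) by simp
      have r2: "rank x < rank y" using par[OF xy(2)] a(1) by simp
      from r1 r2 show False by linarith
    qed
  qed
  define T where "T = te ` V0"
  define own where "own e = (THE x. x \<in> V0 \<and> te x = e)" for e
  have own: "own (te x) = x" if x: "x \<in> V0" for x
    unfolding own_def
  proof (rule the_equality)
    show "x \<in> V0 \<and> te x = te x" using x by simp
    fix y assume "y \<in> V0 \<and> te y = te x"
    thus "y = x" using inj_onD[OF te_inj] x by blast
  qed

  obtain cQ where cQ: "dom_coloring (path_V (k+1)) (path_E (k+1)) cQ" "card (cQ ` path_V (k+1)) = q"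
    using chi_dd_attained[of "path_V (k+1)" "path_E (k+1)"] finite_path_V path_irrefl unfolding q_def by blast
  obtain cP where cP: "dom_coloring (path_V k) (path_E k) cP" "card (cP ` path_V k) = p"
    using chi_dd_attained[of "path_V k" "path_E k"] finite_path_V path_irrefl unfolding p_def by blast
  obtain cR where cR: "dom_coloring (path_V (k-1)) (path_E (k-1)) cR"
      "card (cR ` path_V (k-1)) = chi_dd (path_V (k-1)) (path_E (k-1))"
    using chi_dd_attained[of "path_V (k-1)" "path_E (k-1)"] finite_path_V path_irrefl by blast
  have R_le: "card (cR ` path_V (k-1)) \<le> p"
    using path_mono[of "k-1"] k2 cR(2) unfolding p_def by simp

  define \<iota> :: "'a + 'a \<times> 'a \<times> nat \<Rightarrow> 'a \<times> 'a" where "\<iota> z = (case z of Inl x \<Rightarrow> if x \<in> V0 then te x else (u0, v0) | Inr (u, v, i) \<Rightarrow> (u, v))" for z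
  define d :: "'a + 'a \<times> 'a \<times> nat \<Rightarrow> nat" where "d z = (case z of Inl x \<Rightarrow> if x = u0 then cQ 0 else if x = v0 then cQ k else cP 0
      | Inr (u, v, i) \<Rightarrow> if (u, v) = (u0, v0) then cQ i else if (u, v) \<in> T then
           (if own (u, v) = u then cP i else cP (k - i)) else cR (i - 1))" for z
  have \<iota>_Inl: "\<iota> (Inl x) = (if x \<in> V0 then te x else (u0, v0))" for x unfolding \<iota>_def by simp
  have \<iota>_Inr: "\<iota> (Inr (u, v, i)) = (u, v)" for u v i unfolding \<iota>_def by simp
  have d_Inl: "d (Inl x) = (if x = u0 then cQ 0 else if x = v0 then cQ k else cP 0)" for x unfolding d_def by simp
  have d_Inr: "d (Inr (u, v, i)) = (if (u, v) = (u0, v0) then cQ i else if (u, v) \<in> T then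
           (if own (u, v) = u then cP i else cP (k - i)) else cR (i - 1))" for u v i unfolding d_def by simp
  have \<iota>J: "\<iota> z \<in> J" if "z \<in> VS" for z
    using that
  proof (cases rule: VS_cases)
    case (Inl x) then show ?thesis using teJ e0J by (simp add: \<iota>_Inl)
  next
    case (Inr u v i) then show ?thesis unfolding J_def by (simp add: \<iota>_Inr)
  qed
  define P where "P e = {z \<in> VS. \<iota> z = e}" for e
  have k0: "0 < k" using k2 by simp

  have Pe0: "P (u0, v0) = sp u0 v0 ` {0..<0 + (k + 1)}"
  proof
    show "P (u0, v0) \<subseteq> sp u0 v0 ` {0..<0 + (k + 1)}"
    proof
      fix z assume "z \<in> P (u0, v0)"
      hence z: "z \<in> VS" "\<iota> z = (u0, v0)" unfolding P_def by auto
      from z(1) show "z \<in> sp u0 v0 ` {0..<0 + (k + 1)}"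
      proof (cases rule: VS_cases)
        case (Inl x)
        hence "x \<notin> V0" using z(2) te_ne by (auto simp: \<iota>_Inl split: if_splits)
        hence "x = u0 \<or> x = v0" using Inl unfolding V0_def by auto
        then show ?thesis using Inl k0 by (auto intro: image_eqI[of _ _ 0] image_eqI[of _ _ k])
      next
        case (Inr u v i)
        hence "z = sp u0 v0 i" using z(2) by (simp add: \<iota>_Inr sp_int)
        then show ?thesis using Inr by auto
      qed
    qed
    show "sp u0 v0 ` {0..<0 + (k + 1)} \<subseteq> P (u0, v0)"
    proof
      fix z assume "z \<in> sp u0 v0 ` {0..<0 + (k + 1)}"
      then obtain i where i0: "i \<in> {0..<0 + (k + 1)}" "z = sp u0 v0 i" by blast
      hence i: "i \<le> k" "z = sp u0 v0 i" by auto
      have "z \<in> VS" using sp_in_VS[OF e0 i(1)] i by simp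
      moreover have "\<iota> z = (u0, v0)"
      proof -
        consider "i = 0" | "i = k" | "0 < i \<and> i < k" using i by linarith
        then show ?thesis
          by cases (use i u0V in \<open>auto simp: \<iota>_Inl \<iota>_Inr sp_int V0_def\<close>)
      qed
      ultimately show "z \<in> P (u0, v0)" unfolding P_def by simp
    qed
  qed
  have dc_e0: "dom_coloring (P (u0, v0)) ES d \<and> d ` P (u0, v0) = cQ ` path_V (k+1)"
    unfolding Pe0
  proof (rule seg_fwd[OF e0 cQ(1)])
    show "0 + (k + 1) \<le> k + 1" by simp
    fix i assume i: "i < k + 1"
    consider "i = 0" | "i = k" | "0 < i \<and> i < k" using i by linarith
    then show "d (sp u0 v0 (0 + i)) = cQ i"
      by cases (use u0V in \<open>auto simp: d_Inl d_Inr sp_int\<close>)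
  qed

  have PT: "dom_coloring (P (te x)) ES d \<and> d ` P (te x) = cP ` path_V k" if x: "x \<in> V0" for x
  proof -
    have xV: "x \<in> V" "x \<noteq> u0" "x \<noteq> v0" using x unfolding V0_def by auto
    have teT: "te x \<in> T" using x unfolding T_def by simp
    have PInl: "Inl y \<in> P (te x) \<longleftrightarrow> y = x" for y
    proof
      assume "Inl y \<in> P (te x)"
      hence y: "y \<in> V" "\<iota> (Inl y) = te x" unfolding P_def by (auto simp: Inl_VS)
      show "y = x"
      proof (cases "y \<in> V0")
        case True
        thus ?thesis using y te_inj x by (auto simp: \<iota>_Inl inj_on_def)
      next
        case False thus ?thesis using y te_ne[OF x] by (auto simp: \<iota>_Inl)
      qed
    next
      assume "y = x" thus "Inl y \<in> P (te x)" using x xV unfolding P_def by (simp add: \<iota>_Inl Inl_VS)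
    qed
    have PInr: "Inr (a, b, i) \<in> P (te x) \<longleftrightarrow> (a, b) = te x \<and> 0 < i \<and> i < k" for a b i
      using teJ[OF x] unfolding P_def J_def by (auto simp: \<iota>_Inr Inr_VS)
    from te_cases[OF x] show ?thesis
    proof
      assume h: "te x = (x, par x) \<and> x < par x"
      have ee: "x < par x" "E x (par x)" using h parV[OF x] by auto
      have "P (te x) = sp x (par x) ` {0..<0 + k}"
      proof (rule set_eqI)
        fix z show "z \<in> P (te x) \<longleftrightarrow> z \<in> sp x (par x) ` {0..<0 + k}"
        proof (cases z)
          case (Inl y)
          have "Inl y \<in> sp x (par x) ` {0..<0 + k} \<longleftrightarrow> y = x"
            using k0 ee by (auto simp: sub_pos_def image_iff split: if_splits intro: bexI[of _ 0])
          then show ?thesis using PInl Inl by simp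
        next
          case (Inr r)
          then obtain a b i where r: "z = Inr (a, b, i)" by (cases r) auto
          have "Inr (a, b, i) \<in> sp x (par x) ` {0..<0 + k} \<longleftrightarrow> (a, b) = te x \<and> 0 < i \<and> i < k"
            using h by (auto simp: sub_pos_def image_iff split: if_splits intro: bexI[of _ i])
          then show ?thesis using PInr r by simp
        qed
      qed
      moreover have "dom_coloring (sp x (par x) ` {0..<0 + k}) ES d \<and> d ` (sp x (par x) ` {0..<0 + k}) = cP ` path_V k"
      proof (rule seg_fwd[OF ee cP(1)])
        show "0 + k \<le> k + 1" by simp
        fix i assume i: "i < k"
        have "(x, par x) \<noteq> (u0, v0)" "(x, par x) \<in> T" "own (x, par x) = x"
          using te_ne[OF x] teT own[OF x] h by auto
        then show "d (sp x (par x) (0 + i)) = cP i"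
          using i xV by (cases "i = 0") (auto simp: d_Inl d_Inr sp_int)
      qed
      ultimately show ?thesis by simp
    next
      assume h: "te x = (par x, x) \<and> par x < x"
      have ee: "par x < x" "E (par x) x" using h par[OF x] by auto
      have "P (te x) = sp (par x) x ` {1..k}"
      proof (rule set_eqI)
        fix z show "z \<in> P (te x) \<longleftrightarrow> z \<in> sp (par x) x ` {1..k}"
        proof (cases z)
          case (Inl y)
          have "Inl y \<in> sp (par x) x ` {1..k} \<longleftrightarrow> y = x"
            using k0 ee by (auto simp: sub_pos_def image_iff split: if_splits intro: bexI[of _ k])
          then show ?thesis using PInl Inl by simp
        next
          case (Inr r)
          then obtain a b i where r: "z = Inr (a, b, i)" by (cases r) auto
          have "Inr (a, b, i) \<in> sp (par x) x ` {1..k} \<longleftrightarrow> (a, b) = te x \<and> 0 < i \<and> i < k"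
            using h by (auto simp: sub_pos_def image_iff split: if_splits intro: bexI[of _ i])
          then show ?thesis using PInr r by simp
        qed
      qed
      moreover have "dom_coloring (sp (par x) x ` {1..k}) ES d \<and> d ` (sp (par x) x ` {1..k}) = cP ` path_V k"
      proof (rule seg_bwd[OF ee cP(1)])
        fix i assume i: "i < k"
        have "(par x, x) \<noteq> (u0, v0)" "(par x, x) \<in> T" "own (par x, x) = x" "x \<noteq> par x"
          using te_ne[OF x] teT own[OF x] h by auto
        then show "d (sp (par x) x (k - i)) = cP i"
          using i xV by (cases "i = 0") (auto simp: d_Inl d_Inr sp_int)
      qed
      ultimately show ?thesis by simp
    qed
  qed

  have PNT: "dom_coloring (P e) ES d \<and> d ` P e = cR ` path_V (k-1)"
    if e: "e \<in> J" "e \<noteq> (u0, v0)" "e \<notin> T" for e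
  proof -
    obtain a b where ab: "e = (a, b)" "a < b" "E a b" using e(1) unfolding J_def by auto
    have PInl: "Inl y \<notin> P e" for y
    proof
      assume "Inl y \<in> P e"
      hence "\<iota> (Inl y) = e" unfolding P_def by auto
      thus False using e unfolding T_def by (auto simp: \<iota>_Inl split: if_splits)
    qed
    have "P e = sp a b ` {1..<1 + (k - 1)}"
    proof (rule set_eqI)
      fix z show "z \<in> P e \<longleftrightarrow> z \<in> sp a b ` {1..<1 + (k - 1)}"
      proof (cases z)
        case (Inl y)
        have "Inl y \<notin> sp a b ` {1..<1 + (k - 1)}"
          by (auto simp: sub_pos_def image_iff split: if_splits)
        then show ?thesis using PInl Inl by simp
      next
        case (Inr r)
        then obtain a' b' i where r: "z = Inr (a', b', i)" by (cases r) auto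
        have "Inr (a', b', i) \<in> sp a b ` {1..<1 + (k - 1)} \<longleftrightarrow> (a', b') = (a, b) \<and> 0 < i \<and> i < k"
          using k0 by (auto simp: sub_pos_def image_iff split: if_splits intro: bexI[of _ i])
        moreover have "Inr (a', b', i) \<in> P e \<longleftrightarrow> (a', b') = (a, b) \<and> 0 < i \<and> i < k"
          using ab unfolding P_def by (auto simp: \<iota>_Inr Inr_VS)
        ultimately show ?thesis using r by simp
      qed
    qed
    moreover have "dom_coloring (sp a b ` {1..<1 + (k - 1)}) ES d \<and> d ` (sp a b ` {1..<1 + (k - 1)}) = cR ` path_V (k-1)"
    proof (rule seg_fwd[OF ab(2,3) cR(1)])
      show "1 + (k - 1) \<le> k + 1" by simp
      fix i assume i: "i < k - 1"
      then show "d (sp a b (1 + i)) = cR i"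
        using e ab by (auto simp: d_Inr sp_int)
    qed
    ultimately show ?thesis by simp
  qed

  have parts: "dom_coloring (P e) ES d" and bnd: "card (d ` P e) \<le> (if e = (u0, v0) then q else p)"
    if "e \<in> J" for e
  proof -
    have "dom_coloring (P e) ES d \<and> card (d ` P e) \<le> (if e = (u0, v0) then q else p)"
    proof (cases "e = (u0, v0)")
      case True then show ?thesis using dc_e0 cQ(2) by simp
    next
      case ne: False
      show ?thesis
      proof (cases "e \<in> T")
        case True
        then obtain x where "x \<in> V0" "e = te x" unfolding T_def by auto
        then show ?thesis using PT cP(2) ne by auto
      next
        case False
        then show ?thesis using PNT[OF that ne False] R_le ne by auto
      qed
    qed
    thus "dom_coloring (P e) ES d" "card (d ` P e) \<le> (if e = (u0, v0) then q else p)" by auto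
  qed
  obtain idx :: "'a \<times> 'a \<Rightarrow> nat" where idx: "inj_on idx J"
    using finite_imp_inj_to_nat_seg[OF finJ] by blast
  define F where "F pr = prod_encode (idx (fst pr), snd pr)" for pr
  have injF: "inj_on F (J \<times> UNIV)"
  proof (rule inj_onI)
    fix a b assume ab: "a \<in> J \<times> UNIV" "b \<in> J \<times> UNIV" "F a = F b"
    hence "idx (fst a) = idx (fst b)" "snd a = snd b" unfolding F_def by auto
    moreover have "fst a = fst b" using inj_onD[OF idx \<open>idx (fst a) = idx (fst b)\<close>] ab by auto
    ultimately show "a = b" by (simp add: prod_eq_iff)
  qed
  have dcS: "dom_coloring VS ES (\<lambda>z. F (\<iota> z, d z))"
    by (rule dom_coloring_union[OF \<iota>J _ injF]) (use parts in \<open>auto simp: P_def\<close>)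
  have "chi_dd VS ES \<le> card ((\<lambda>z. F (\<iota> z, d z)) ` VS)" by (rule chi_dd_le[OF dcS])
  also have "\<dots> \<le> (\<Sum>e\<in>J. card (d ` P e))"
    unfolding P_def by (rule card_union_bound[OF finite_VS finJ \<iota>J])
  also have "\<dots> \<le> (\<Sum>e\<in>J. (if e = (u0, v0) then q else p))"
    by (rule sum_mono) (rule bnd)
  also have "\<dots> = (if (u0, v0) = (u0, v0) then q else p) + (\<Sum>e\<in>J - {(u0, v0)}. (if e = (u0, v0) then q else p))"
    by (rule sum.remove[OF finJ e0J])
  also have "(\<Sum>e\<in>J - {(u0, v0)}. (if e = (u0, v0) then q else p)) = (\<Sum>e\<in>J - {(u0, v0)}. p)"
    by (rule sum.cong) auto
  also have "(\<Sum>e\<in>J - {(u0, v0)}. p) = (card J - 1) * p"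
    using finJ e0J by simp
  finally show ?thesis unfolding J_def p_def q_def by simp
qed

end

lemma card_J:
  assumes sg: "simple_graph V E"
  shows "card {(u, v). u < v \<and> E u v} = num_edges V (E :: 'a::linorder \<Rightarrow> 'a \<Rightarrow> bool)"
proof -
  define J where "J = {(u, v). u < v \<and> E u v}"
  define S where "S = {{u, v} | u v. u \<in> V \<and> v \<in> V \<and> E u v}"
  have Ep: "\<And>u v. E u v \<Longrightarrow> u \<in> V \<and> v \<in> V \<and> u \<noteq> v \<and> E v u"
    using sg unfolding simple_graph_def by blast
  have img: "(\<lambda>(u, v). {u, v}) ` J = S"
  proof
    show "(\<lambda>(u, v). {u, v}) ` J \<subseteq> S" unfolding J_def S_def using Ep by auto
    show "S \<subseteq> (\<lambda>(u, v). {u, v}) ` J"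
    proof
      fix s assume "s \<in> S"
      then obtain u v where uv: "s = {u, v}" "E u v" unfolding S_def by blast
      show "s \<in> (\<lambda>(u, v). {u, v}) ` J"
      proof (cases "u < v")
        case True
        hence "(u, v) \<in> J" using uv unfolding J_def by simp
        thus ?thesis using uv by force
      next
        case False
        hence "v < u" "E v u" using Ep[OF uv(2)] by auto
        hence "(v, u) \<in> J" unfolding J_def by simp
        moreover have "s = {v, u}" using uv by auto
        ultimately show ?thesis by force
      qed
    qed
  qed
  have inj: "inj_on (\<lambda>(u, v). {u, v}) J"
  proof (rule inj_onI)
    fix p1 p2 assume a: "p1 \<in> J" "p2 \<in> J" "(\<lambda>(u, v). {u, v}) p1 = (\<lambda>(u, v). {u, v}) p2"
    obtain a1 b1 where p1: "p1 = (a1, b1)" "a1 < b1" using a(1) unfolding J_def by auto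
    obtain a2 b2 where p2: "p2 = (a2, b2)" "a2 < b2" using a(2) unfolding J_def by auto
    have "{a1, b1} = {a2, b2}" using a(3) p1 p2 by simp
    hence "a1 = a2 \<and> b1 = b2 \<or> a1 = b2 \<and> b1 = a2" by (simp only: doubleton_eq_iff)
    thus "p1 = p2" using p1 p2 by auto
  qed
  have "card J = card S" using card_image[OF inj] img by simp
  thus ?thesis unfolding J_def S_def num_edges_def by simp
qed

theorem theorem5:
  fixes V :: "('a::linorder) set" and E :: "'a \<Rightarrow> 'a \<Rightarrow> bool" and k m :: nat
  assumes "simple_graph V E" and "connected_graph V E"
    and "m = num_edges V E" and "m \<ge> 1" and "k \<ge> 2"
  shows "chi_dd (path_V (k + 1)) (path_E (k + 1)) \<le> chi_dd (subdiv_V k V E) (subdiv_E k V E)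
       \<and> chi_dd (subdiv_V k V E) (subdiv_E k V E)
           \<le> (m - 1) * chi_dd (path_V k) (path_E k) + chi_dd (path_V (k + 1)) (path_E (k + 1))"
proof -
  interpret subd V E k using assms(1,5) by unfold_locales
  have "{{u, v} | u v. u \<in> V \<and> v \<in> V \<and> E u v} \<noteq> {}"
    using assms(3,4) unfolding num_edges_def by (metis card.empty not_one_le_zero)
  then obtain u v where uv: "E u v" by blast
  obtain a b where ab: "a < b" "E a b"
  proof (cases "u < v")
    case True thus ?thesis using that uv by blast
  next
    case False
    hence "v < u" "E v u" using E_props[OF uv] by auto
    thus ?thesis using that by blast
  qed
  have cJ: "card {(u, v). u < v \<and> E u v} = m" using card_J[OF assms(1)] assms(3) by simp
  show ?thesis using lower[OF ab] upper[OF assms(2) ab] cJ by simp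
qed


end
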